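(* Let $k\in\mathbb{Z}$ and $\imath\in\mathbb{Z}_{>1}$. The rational polygon $\mathrm{conv}((0,0),(k,\imath),(k+2/5,\imath))$ is canonical if and only if the rational polygon $\mathrm{conv}((0,0),(k,\imath),(k+1/3,\imath))$ is canonical.
   Context: For rationals $a<b$ and $\imath\in\mathbb{Z}_{>1}$, the polygon $\mathrm{conv}((0,0),(a,\imath),(b,\imath))$ is called canonical if every lattice point $p\neq(0,0)$ in it satisfies $p_2=\imath$. *)

theory Defs
  imports "HOL-Analysis.Analysis"
begin

definition lattice_point :: "real \<times> real \<Rightarrow> bool" where
  "lattice_point p \<longleftrightarrow> fst p \<in> \<int> \<and> snd p \<in> \<int>"

text \<open>For rationals a < b and an integer i > 1, conv((0,0),(a,i),(b,i)) is canonical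
  iff every lattice point p \<noteq> (0,0) in it satisfies p_2 = i.\<close>
definition canonical :: "rat \<Rightarrow> rat \<Rightarrow> int \<Rightarrow> bool" where
  "canonical a b i \<longleftrightarrow>
     (\<forall>p \<in> convex hull {(0,0), (of_rat a, of_int i), (of_rat b, of_int i)}.
        lattice_point p \<and> p \<noteq> (0,0) \<longrightarrow> snd p = of_int i)"

end

theory Submission
  imports Defs
begin

definition W :: "int \<Rightarrow> int \<Rightarrow> real \<Rightarrow> bool" where
  "W k i w \<longleftrightarrow> (\<exists>m j::int. 0 < j \<and> j < i \<and> 0 \<le> m*i - k*j \<and> real_of_int (m*i - k*j) \<le> w * j)"

lemma canon_iff:
  fixes k i :: int and a b :: rat and w :: real
  assumes i: "i > 1" and w: "w > 0" and a: "of_rat a = real_of_int k" and b: "of_rat b = real_of_int k + w"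
  shows "canonical a b i \<longleftrightarrow> \<not> W k i w"
proof
  assume c: "canonical a b i"
  show "\<not> W k i w"
  proof
    assume "W k i w"
    then obtain m j :: int where j: "0 < j" "j < i" and r: "0 \<le> m*i - k*j" "real_of_int (m*i - k*j) \<le> w * j"
      unfolding W_def by blast
    define u where "u = real_of_int (m*i - k*j) / (w * i)"
    define v where "v = real_of_int j / i - u"
    have ip: "real_of_int i > 0" using i by simp
    have u0: "u \<ge> 0" unfolding u_def
      by (rule divide_nonneg_pos, simp only: of_int_0_le_iff r(1), use w ip in simp)
    have "u \<le> real_of_int j / i" unfolding u_def using r w ip
      by (simp add: divide_simps mult.commute mult.left_commute)
    hence v0: "v \<ge> 0" unfolding v_def by simp
    have s: "u + v \<le> 1" unfolding v_def using j ip by simp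
    have eq: "(real_of_int m, real_of_int j) = (1 - u - v) *\<^sub>R (0::real,0::real) + v *\<^sub>R (real_of_int k, real_of_int i) + u *\<^sub>R (real_of_int k + w, real_of_int i)"
    proof -
      have "v * k + u * (k + w) = real_of_int j / i * k + u * w" unfolding v_def by (simp add: algebra_simps)
      also have "u * w = (real_of_int m * i - real_of_int k * j) / i" unfolding u_def using w ip by (simp add: field_simps)
      finally have 1: "v * k + u * (k + w) = real_of_int m" using ip by (simp add: field_simps)
      have 2: "v * i + u * i = real_of_int j" unfolding v_def using ip by (simp add: field_simps)
      show ?thesis using 1 2 by (simp add: algebra_simps)
    qed
    have "(real_of_int m, real_of_int j) \<in> convex hull {(0,0), (of_rat a, of_int i), (of_rat b, of_int i)}"
      unfolding convex_hull_3 a b using u0 v0 s eq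
      by (intro CollectI exI[of _ "1-u-v"] exI[of _ v] exI[of _ u]) auto
    moreover have "lattice_point (real_of_int m, real_of_int j)" unfolding lattice_point_def by simp
    moreover have "(real_of_int m, real_of_int j) \<noteq> (0,0)" using j by simp
    ultimately have "real_of_int j = of_int i" using c unfolding canonical_def by fastforce
    thus False using j by simp
  qed
next
  assume nW: "\<not> W k i w"
  show "canonical a b i"
    unfolding canonical_def
  proof (intro ballI impI)
    fix p assume p: "p \<in> convex hull {(0,0), (of_rat a, of_int i), (of_rat b, of_int i)}"
      and lp: "lattice_point p \<and> p \<noteq> (0,0)"
    obtain s v u where suv: "0 \<le> s" "0 \<le> v" "0 \<le> u" "s + v + u = 1"
      and pe: "p = s *\<^sub>R (0::real,0::real) + v *\<^sub>R (real_of_int k, real_of_int i) + u *\<^sub>R (real_of_int k + w, real_of_int i)"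
      using p unfolding convex_hull_3 a b by blast
    obtain m j :: int where mj: "p = (of_int m, of_int j)"
      using lp unfolding lattice_point_def by (metis Ints_cases prod.collapse)
    have ip: "real_of_int i > 0" using i by simp
    have e1: "real_of_int m = (v+u) * k + u * w" using pe mj by (simp add: algebra_simps)
    have e2: "real_of_int j = (v+u) * i" using pe mj by (simp add: algebra_simps)
    show "snd p = of_int i"
    proof (rule ccontr)
      assume ne: "snd p \<noteq> of_int i"
      have "real_of_int j \<le> i" using e2 suv ip by (simp add: mult_left_le_one_le)
      with ne mj have jl: "j < i" by simp
      have "v + u \<noteq> 0"
      proof
        assume "v + u = 0" hence "v = 0" "u = 0" using suv by auto
        thus False using e1 e2 lp mj by simp
      qed
      hence "v + u > 0" using suv by simp
      hence jp: "j > 0" using e2 ip by (smt (verit) of_int_0_less_iff zero_less_mult_iff)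
      have rr: "real_of_int (m*i - k*j) = u * w * i" using e1 e2 by (simp add: algebra_simps)
      have "0 \<le> m*i - k*j" using rr suv w ip by (smt (verit) mult_nonneg_nonneg of_int_0_le_iff)
      moreover have "real_of_int (m*i - k*j) \<le> w * j"
      proof -
        have "u * w * i \<le> (v+u) * i * w" using suv w ip
          by (smt (verit) mult_right_mono mult.commute mult.left_commute)
        thus ?thesis using rr e2 by (simp add: algebra_simps)
      qed
      ultimately show False using nW jp jl unfolding W_def by blast
    qed
  qed
qed

lemma W_main:
  fixes k i :: int assumes i: "i > 1"
  shows "W k i (2/5) \<longleftrightarrow> W k i (1/3)"
proof
  assume "W k i (1/3)" thus "W k i (2/5)" unfolding W_def by fastforce
next
  assume "W k i (2/5)"
  then obtain m j :: int where j: "0 < j" "j < i" and r: "0 \<le> m*i - k*j" "real_of_int (m*i - k*j) \<le> 2/5 * j"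
    unfolding W_def by blast
  have "real_of_int (5 * (m*i - k*j)) \<le> real_of_int (2 * j)" using r(2) by simp
  hence r2: "5 * (m*i - k*j) \<le> 2 * j" by (simp only: of_int_le_iff)
  show "W k i (1/3)"
  proof (cases "gcd k i = 1")
    case False
    define g where "g = gcd k i"
    have gp: "g > 0" using i unfolding g_def by simp
    have g1: "g > 1" using False gp unfolding g_def by linarith
    obtain a where ia: "i = g * a" unfolding g_def by (meson gcd_dvd2 dvdE)
    obtain c where kc: "k = g * c" unfolding g_def by (meson gcd_dvd1 dvdE)
    have a0: "0 < a" using ia gp i by (metis less_trans zero_less_one zero_less_mult_pos)
    have a1: "a < i" using ia g1 a0 by simp
    have "c * i - k * a = 0" using ia kc by simp
    thus ?thesis unfolding W_def using a0 a1 by (intro exI[of _ c] exI[of _ a]) simp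
  next
    case True
    obtain u v where uv: "u * k + v * i = 1" using bezout_int[of k i] True by auto
    define j1 where "j1 = (-u) mod i"
    have j1r: "0 \<le> j1" "j1 < i" unfolding j1_def using i by auto
    have "i dvd (k * j1 + 1)"
    proof -
      have "j1 = -u - i * ((-u) div i)" unfolding j1_def by (simp add: mod_div_mult_eq minus_div_mult_eq_mod[symmetric])
      hence "k * j1 + 1 = i * (v - k * ((-u) div i))" using uv by algebra
      thus ?thesis by (rule dvdI)
    qed
    then obtain m1 where m1: "k * j1 + 1 = i * m1" by blast
    consider "j1 = 0" | "j1 = 1" | "j1 = 2" | "j1 \<ge> 3" using j1r by linarith
    thus ?thesis
    proof cases
      case 1 then have "i dvd 1" using m1 by (metis add_0 dvd_triv_left mult_zero_right)
      thus ?thesis using i by simp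
    next
      case 2
      hence "k + 1 = i * m1" using m1 by simp
      hence "(m*i - k*j) - j = i * (m - m1 * j)" by algebra
      hence "i dvd (j - (m*i - k*j))" by (metis dvd_minus_iff dvd_triv_left minus_diff_eq)
      moreover have "0 < j - (m*i - k*j)" using r(1) r2 j by (smt (verit))
      moreover have "j - (m*i - k*j) < i" using r(1) r2 j by (smt (verit))
      ultimately show ?thesis by (meson zdvd_imp_le not_le)
    next
      case 3
      hence "2*k + 1 = i * m1" using m1 by simp
      hence "2*(m*i - k*j) - j = i * (2*m - m1 * j)" by algebra
      hence "i dvd (j - 2*(m*i - k*j))" by (metis dvd_minus_iff dvd_triv_left minus_diff_eq)
      moreover have "0 < j - 2*(m*i - k*j)" using r(1) r2 j by (smt (verit))
      moreover have "j - 2*(m*i - k*j) < i" using r(1) r2 j by (smt (verit))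
      ultimately show ?thesis by (meson zdvd_imp_le not_le)
    next
      case 4
      have "m1 * i - k * j1 = 1" using m1 by (simp add: algebra_simps)
      thus ?thesis unfolding W_def using 4 j1r by (intro exI[of _ m1] exI[of _ j1]) auto
    qed
  qed
qed

theorem mainTheorem12:
  fixes k i :: int
  assumes "i > 1"
  shows "canonical (of_int k) (of_int k + 2/5) i \<longleftrightarrow> canonical (of_int k) (of_int k + 1/3) i"
proof -
  have "canonical (of_int k) (of_int k + 2/5) i \<longleftrightarrow> \<not> W k i (2/5)"
    by (rule canon_iff) (use assms in \<open>auto simp: of_rat_add of_rat_divide\<close>)
  moreover have "canonical (of_int k) (of_int k + 1/3) i \<longleftrightarrow> \<not> W k i (1/3)"
    by (rule canon_iff) (use assms in \<open>auto simp: of_rat_add of_rat_divide\<close>)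
  ultimately show ?thesis using W_main[OF assms] by simp
qed

end
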